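(* Let $n\ge1$ and $\gamma\in PSL(n+1,\mathbb{C})$. Then $\gamma$ is elliptic if and only if there exists $h\in PSL(n+1,\mathbb{C})$ such that $h^{-1}\gamma h(T(r))=T(r)$ for every $r>0$, where $T(r)=\{[z_1:\dots:z_{n+1}]\in\mathbb{P}^n_{\mathbb{C}}:\ \sum_{j=1}^n|z_j|^2=r|z_{n+1}|^2\}$ (these $T(r)$, $r>0$, form a foliation of $\mathbb{C}^n\setminus\{0\}=\mathbb{P}^n_{\mathbb{C}}\setminus(\{z_{n+1}=0\}\cup\{[e_{n+1}]\})$ by concentric spheres).
   Context: $\gamma\in PSL(n+1,\mathbb{C})=GL(n+1,\mathbb{C})/\mathbb{C}^*$ is called elliptic if every lift $\widetilde\gamma\in SL(n+1,\mathbb{C})$ of $\gamma$ is diagonalizable and all its eigenvalues have modulus $1$. *)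

theory Defs
  imports Complex_Main "Jordan_Normal_Form.Matrix" "Jordan_Normal_Form.Determinant" "Jordan_Normal_Form.Char_Poly"
begin

(* An element of PSL(n+1,C) = GL(n+1,C)/C^* is represented by any invertible
   (n+1)x(n+1) complex matrix G (a lift).  Coordinates z_1..z_{n+1} are indices 0..n. *)

definition diagonalizable_mat :: "complex mat \<Rightarrow> bool" where
  "diagonalizable_mat L \<longleftrightarrow> (\<exists>D. similar_mat L D \<and> diagonal_mat D)"

definition SL_lift :: "nat \<Rightarrow> complex mat \<Rightarrow> complex mat \<Rightarrow> bool" where
  "SL_lift n G L \<longleftrightarrow> L \<in> carrier_mat (n+1) (n+1) \<and> det L = 1 \<and> (\<exists>c. c \<noteq> 0 \<and> L = c \<cdot>\<^sub>m G)"

definition elliptic :: "nat \<Rightarrow> complex mat \<Rightarrow> bool" where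
  "elliptic n G \<longleftrightarrow> (\<forall>L. SL_lift n G L \<longrightarrow>
      diagonalizable_mat L \<and> (\<forall>k. eigenvalue L k \<longrightarrow> cmod k = 1))"

definition proj_point :: "complex vec \<Rightarrow> complex vec set" where
  "proj_point z = {c \<cdot>\<^sub>v z | c. c \<noteq> 0}"

definition Tsphere :: "nat \<Rightarrow> real \<Rightarrow> complex vec set set" where
  "Tsphere n r = {proj_point z | z. z \<in> carrier_vec (n+1) \<and> z \<noteq> 0\<^sub>v (n+1) \<and>
       (\<Sum>j<n. (cmod (z $ j))\<^sup>2) = r * (cmod (z $ n))\<^sup>2}"

definition proj_image :: "complex mat \<Rightarrow> complex vec set set \<Rightarrow> complex vec set set" where
  "proj_image A S = {proj_point (A *\<^sub>v z) | z. z \<in> carrier_vec (dim_col A) \<and>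
       z \<noteq> 0\<^sub>v (dim_col A) \<and> proj_point z \<in> S}"

end

theory Submission imports Defs "Jordan_Normal_Form.Jordan_Normal_Form_Uniqueness" "Jordan_Normal_Form.Jordan_Normal_Form_Existence" begin

definition EQ :: "nat \<Rightarrow> real \<Rightarrow> complex vec \<Rightarrow> bool" where
  "EQ n r w \<longleftrightarrow> (\<Sum>j<n. (cmod (w $ j))\<^sup>2) = r * (cmod (w $ n))\<^sup>2"

lemma EQ_smult:
  assumes "z \<in> carrier_vec (n+1)" "c \<noteq> 0"
  shows "EQ n r (c \<cdot>\<^sub>v z) \<longleftrightarrow> EQ n r z"
proof -
  have "(\<Sum>j<n. (cmod ((c \<cdot>\<^sub>v z) $ j))\<^sup>2) = (cmod c)^2 * (\<Sum>j<n. (cmod (z $ j))\<^sup>2)"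
    using assms(1) by (simp add: sum_distrib_left norm_mult power_mult_distrib)
  moreover have "(cmod ((c \<cdot>\<^sub>v z) $ n))\<^sup>2 = (cmod c)^2 * (cmod (z $ n))\<^sup>2"
    using assms(1) by (simp add: norm_mult power_mult_distrib)
  ultimately show ?thesis using assms(2) unfolding EQ_def by auto
qed

lemma smult_vec_zero_iff:
  assumes "z \<in> carrier_vec m" "(c::complex) \<noteq> 0"
  shows "c \<cdot>\<^sub>v z = 0\<^sub>v m \<longleftrightarrow> z = 0\<^sub>v m"
proof
  assume h: "c \<cdot>\<^sub>v z = 0\<^sub>v m"
  show "z = 0\<^sub>v m"
  proof (rule eq_vecI)
    fix i assume "i < dim_vec (0\<^sub>v m)"
    hence i: "i < m" by simp
    from arg_cong[OF h, of "\<lambda>v. v $ i"] have "c * z $ i = 0" using assms(1) i by simp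
    thus "z $ i = 0\<^sub>v m $ i" using assms(2) i by simp
  qed (use assms in auto)
qed (use assms in auto)

lemma memT:
  assumes w: "w \<in> carrier_vec (n+1)"
  shows "proj_point w \<in> Tsphere n r \<longleftrightarrow> w \<noteq> 0\<^sub>v (n+1) \<and> EQ n r w"
proof
  assume "proj_point w \<in> Tsphere n r"
  then obtain z where z: "proj_point w = proj_point z" "z \<in> carrier_vec (n+1)" "z \<noteq> 0\<^sub>v (n+1)"
    "EQ n r z" unfolding Tsphere_def EQ_def by auto
  have "w \<in> proj_point w" unfolding proj_point_def by (rule CollectI, rule exI[of _ 1], auto)
  with z(1) obtain c where c: "c \<noteq> 0" "w = c \<cdot>\<^sub>v z" unfolding proj_point_def by auto
  show "w \<noteq> 0\<^sub>v (n+1) \<and> EQ n r w"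
    using c z smult_vec_zero_iff[OF z(2) c(1)] EQ_smult[OF z(2) c(1)] by auto
next
  assume "w \<noteq> 0\<^sub>v (n+1) \<and> EQ n r w"
  thus "proj_point w \<in> Tsphere n r" using w unfolding Tsphere_def EQ_def by auto
qed

lemma proj_image_mem:
  assumes "M \<in> carrier_mat (n+1) (n+1)" "w \<in> carrier_vec (n+1)" "w \<noteq> 0\<^sub>v (n+1)" "proj_point w \<in> S"
  shows "proj_point (M *\<^sub>v w) \<in> proj_image M S"
  using assms unfolding proj_image_def by auto

lemma proj_image_E:
  assumes "M \<in> carrier_mat (n+1) (n+1)" "p \<in> proj_image M S"
  obtains w where "w \<in> carrier_vec (n+1)" "w \<noteq> 0\<^sub>v (n+1)" "proj_point w \<in> S" "p = proj_point (M *\<^sub>v w)"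
  using assms unfolding proj_image_def by auto

lemma diag_preserves:
  assumes K: "K \<in> carrier_mat (n+1) (n+1)" and dg: "diagonal_mat K"
    and b: "b > 0" and mods: "\<And>i. i < n+1 \<Longrightarrow> cmod (K $$ (i,i)) = b"
  shows "proj_image K (Tsphere n r) = Tsphere n r"
proof -
  have Kv: "(K *\<^sub>v z) $ i = K $$ (i,i) * z $ i" if z: "z \<in> carrier_vec (n+1)" and i: "i < n+1" for z i
  proof -
    have "(K *\<^sub>v z) $ i = (\<Sum>j<n+1. K $$ (i,j) * z $ j)"
      using K z i by (simp add: mult_mat_vec_def scalar_prod_def lessThan_atLeast0)
    also have "\<dots> = (\<Sum>j<n+1. if j = i then K $$ (i,i) * z $ i else 0)"
      using dg K i unfolding diagonal_mat_def by (intro sum.cong) auto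
    also have "\<dots> = K $$ (i,i) * z $ i" using i by simp
    finally show ?thesis .
  qed
  have nz: "K $$ (i,i) \<noteq> 0" if "i < n+1" for i using mods[OF that] b by auto
  have EQK: "EQ n r (K *\<^sub>v z) \<longleftrightarrow> EQ n r z" if z: "z \<in> carrier_vec (n+1)" for z
  proof -
    have "(\<Sum>j<n. (cmod ((K *\<^sub>v z) $ j))\<^sup>2) = b^2 * (\<Sum>j<n. (cmod (z $ j))\<^sup>2)"
      using z by (simp add: sum_distrib_left Kv mods norm_mult power_mult_distrib)
    moreover have "(cmod ((K *\<^sub>v z) $ n))\<^sup>2 = b^2 * (cmod (z $ n))\<^sup>2"
      using z by (simp add: Kv mods norm_mult power_mult_distrib)
    ultimately show ?thesis using b unfolding EQ_def by auto
  qed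
  have Knz: "K *\<^sub>v z \<noteq> 0\<^sub>v (n+1)" if z: "z \<in> carrier_vec (n+1)" "z \<noteq> 0\<^sub>v (n+1)" for z
  proof
    assume h: "K *\<^sub>v z = 0\<^sub>v (n+1)"
    have "z = 0\<^sub>v (n+1)"
    proof (rule eq_vecI)
      fix i assume "i < dim_vec (0\<^sub>v (n+1))"
      hence i: "i < n+1" by simp
      from arg_cong[OF h, of "\<lambda>v. v $ i"] have "K $$ (i,i) * z $ i = 0" using Kv[OF z(1) i] i by simp
      thus "z $ i = 0\<^sub>v (n+1) $ i" using nz[OF i] i by simp
    qed (use z in auto)
    with z(2) show False by simp
  qed
  show ?thesis
  proof
    show "proj_image K (Tsphere n r) \<subseteq> Tsphere n r"
    proof
      fix p assume "p \<in> proj_image K (Tsphere n r)"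
      then obtain w where w: "w \<in> carrier_vec (n+1)" "w \<noteq> 0\<^sub>v (n+1)" "proj_point w \<in> Tsphere n r"
        "p = proj_point (K *\<^sub>v w)" by (rule proj_image_E[OF K])
      have Kw: "K *\<^sub>v w \<in> carrier_vec (n+1)" using K w by auto
      show "p \<in> Tsphere n r" unfolding w(4) memT[OF Kw] using w memT[OF w(1)] EQK[OF w(1)] Knz by auto
    qed
  next
    show "Tsphere n r \<subseteq> proj_image K (Tsphere n r)"
    proof
      fix p assume p: "p \<in> Tsphere n r"
      then obtain y where y: "p = proj_point y" "y \<in> carrier_vec (n+1)"
        unfolding Tsphere_def by auto
      define z where "z = vec (n+1) (\<lambda>i. y $ i / K $$ (i,i))"
      have z: "z \<in> carrier_vec (n+1)" unfolding z_def by auto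
      have Kz: "K *\<^sub>v z = y"
      proof (rule eq_vecI)
        fix i assume "i < dim_vec y"
        hence i: "i < n+1" using y by simp
        show "(K *\<^sub>v z) $ i = y $ i" unfolding Kv[OF z i] using i nz[OF i] by (simp add: z_def)
      qed (use K y in auto)
      have "y \<noteq> 0\<^sub>v (n+1)" "EQ n r y" using p y memT[OF y(2)] by auto
      hence "z \<noteq> 0\<^sub>v (n+1)" "EQ n r z" using Kz EQK[OF z] K by auto
      hence "proj_point z \<in> Tsphere n r" using memT[OF z] by auto
      from proj_image_mem[OF K z \<open>z \<noteq> _\<close> this] show "p \<in> proj_image K (Tsphere n r)"
        using Kz y by simp
    qed
  qed
qed

definition sqf :: "complex vec \<Rightarrow> nat \<Rightarrow> real" where
  "sqf v m = (\<Sum>j<m. (cmod (v $ j))\<^sup>2)"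

lemma sqf_pos:
  assumes "v \<in> carrier_vec m" "v \<noteq> 0\<^sub>v m"
  shows "sqf v m > 0"
proof -
  obtain j where j: "j < m" "v $ j \<noteq> 0"
  proof -
    { assume "\<forall>j<m. v $ j = 0"
      hence "v = 0\<^sub>v m" using assms(1) by (intro eq_vecI) auto
      with assms(2) have False by simp }
    thus ?thesis using that by blast
  qed
  have "0 < (cmod (v $ j))\<^sup>2" using j by simp
  also have "\<dots> \<le> sqf v m" unfolding sqf_def
    by (rule member_le_sum[of j "{..<m}" "\<lambda>j. (cmod (v $ j))\<^sup>2"]) (use j in auto)
  finally show ?thesis .
qed

lemma sqf_zero:
  assumes "v \<in> carrier_vec m" "sqf v m = 0"
  shows "v = 0\<^sub>v m"
  using sqf_pos[OF assms(1)] assms(2) by fastforce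

lemma iso_eig:
  assumes K: "K \<in> carrier_mat m m"
    and iso: "\<And>w. w \<in> carrier_vec m \<Longrightarrow> sqf (K *\<^sub>v w) m = s * sqf w m"
    and ev: "eigenvalue K k"
  shows "(cmod k)^2 = s"
proof -
  from ev obtain v where v: "v \<in> carrier_vec m" "v \<noteq> 0\<^sub>v m" "K *\<^sub>v v = k \<cdot>\<^sub>v v"
    unfolding eigenvalue_def eigenvector_def using K by auto
  have "sqf (K *\<^sub>v v) m = (cmod k)^2 * sqf v m"
    unfolding v(3) sqf_def using v(1) by (simp add: sum_distrib_left norm_mult power_mult_distrib)
  with iso[OF v(1)] sqf_pos[OF v(1,2)] show ?thesis by simp
qed

lemma charmat_idx:
  assumes K: "K \<in> carrier_mat m m" and x: "x \<in> carrier_vec m" and j: "j < m"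
  shows "(char_matrix K ev *\<^sub>v x) $ j = (K *\<^sub>v x) $ j - ev * x $ j"
proof -
  have "char_matrix K ev *\<^sub>v x = K *\<^sub>v x + ((-ev) \<cdot>\<^sub>m 1\<^sub>m m) *\<^sub>v x"
    unfolding char_matrix_def using K x by (simp add: add_mult_distrib_mat_vec[of _ m m])
  thus ?thesis using K x j by simp
qed

lemma sq_identity:
  fixes u y :: complex
  shows "(cmod u)^2 - 2 * (cmod (u + y))^2 + (cmod (u + 2 * y))^2 = 2 * (cmod y)^2"
  unfolding cmod_power2 by (simp add: algebra_simps power2_eq_square)

lemma iso_nilp:
  assumes K: "K \<in> carrier_mat m m" and s: "s > 0"
    and iso: "\<And>w. w \<in> carrier_vec m \<Longrightarrow> sqf (K *\<^sub>v w) m = s * sqf w m"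
    and x: "x \<in> carrier_vec m"
    and y: "y = char_matrix K ev *\<^sub>v x"
    and Cy: "char_matrix K ev *\<^sub>v y = 0\<^sub>v m"
  shows "y = 0\<^sub>v m"
proof (rule ccontr)
  assume ynz: "y \<noteq> 0\<^sub>v m"
  have yc: "y \<in> carrier_vec m" using y K x by (metis char_matrix_closed mult_mat_vec_carrier)
  have Kx: "(K *\<^sub>v x) $ j = ev * x $ j + y $ j" if "j < m" for j
    using charmat_idx[OF K x that, of ev] y by simp
  have Ky: "(K *\<^sub>v y) $ j = ev * y $ j" if "j < m" for j
    using charmat_idx[OF K yc that, of ev] Cy that by simp
  have "K *\<^sub>v y = ev \<cdot>\<^sub>v y" using Ky K yc by (intro eq_vecI) auto
  hence "eigenvalue K ev" unfolding eigenvalue_def eigenvector_def using K yc ynz by auto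
  from iso_eig[OF K iso this] have evs: "(cmod ev)^2 = s" .
  hence ev0: "ev \<noteq> 0" using s by auto
  have key: "(\<Sum>j<m. (cmod (ev * x $ j + (1 + c * ev) * y $ j))\<^sup>2) =
    (\<Sum>j<m. (cmod (ev * x $ j + (c * ev) * y $ j))\<^sup>2)" for c
  proof -
    define w where "w = x + c \<cdot>\<^sub>v y"
    have w: "w \<in> carrier_vec m" unfolding w_def using x yc by simp
    have Kw: "(K *\<^sub>v w) $ j = ev * x $ j + (1 + c * ev) * y $ j" if "j < m" for j
    proof -
      have "K *\<^sub>v w = K *\<^sub>v x + c \<cdot>\<^sub>v (K *\<^sub>v y)" unfolding w_def
        using K x yc by (simp add: mult_add_distrib_mat_vec[of _ m m] mult_mat_vec[of _ m m])
      thus ?thesis using that K x yc Kx Ky by (simp add: algebra_simps)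
    qed
    have "(\<Sum>j<m. (cmod (ev * x $ j + (1 + c * ev) * y $ j))\<^sup>2) = sqf (K *\<^sub>v w) m"
      unfolding sqf_def by (rule sum.cong) (auto simp: Kw)
    also have "\<dots> = s * sqf w m" by (rule iso[OF w])
    also have "\<dots> = (\<Sum>j<m. (cmod (ev * w $ j))\<^sup>2)" unfolding sqf_def evs[symmetric]
      by (simp add: sum_distrib_left norm_mult power_mult_distrib)
    also have "\<dots> = (\<Sum>j<m. (cmod (ev * x $ j + (c * ev) * y $ j))\<^sup>2)"
      by (rule sum.cong) (use x yc in \<open>auto simp: w_def algebra_simps\<close>)
    finally show ?thesis .
  qed
  from key[of 0] key[of "1/ev"] ev0 have
    e1: "(\<Sum>j<m. (cmod (ev * x $ j + y $ j))\<^sup>2) = (\<Sum>j<m. (cmod (ev * x $ j))\<^sup>2)" and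
    e2: "(\<Sum>j<m. (cmod (ev * x $ j + 2 * y $ j))\<^sup>2) = (\<Sum>j<m. (cmod (ev * x $ j + y $ j))\<^sup>2)"
    by (auto simp: one_add_one)
  have "2 * sqf y m = (\<Sum>j<m. (cmod (ev * x $ j))\<^sup>2) - 2 * (\<Sum>j<m. (cmod (ev * x $ j + y $ j))\<^sup>2)
      + (\<Sum>j<m. (cmod (ev * x $ j + 2 * y $ j))\<^sup>2)"
    unfolding sqf_def sum_distrib_left sum_subtractf[symmetric] sum.distrib[symmetric]
    by (rule sum.cong, simp, rule sq_identity[symmetric])
  also have "\<dots> = 0" using e1 e2 by simp
  finally have "sqf y m = 0" by simp
  from sqf_zero[OF yc this] ynz show False by simp
qed

lemma mat_vec_zero: "(A::complex mat) \<in> carrier_mat nr nc \<Longrightarrow> A *\<^sub>v 0\<^sub>v nc = 0\<^sub>v nr"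
  by (intro eq_vecI) (auto simp: row_def)

lemma sum_list_eq_mono:
  fixes f g :: "'a \<Rightarrow> nat"
  assumes "\<And>x. x \<in> set xs \<Longrightarrow> g x \<le> f x" "sum_list (map f xs) = sum_list (map g xs)"
  shows "x \<in> set xs \<Longrightarrow> f x = g x"
  using assms
proof (induct xs)
  case (Cons a xs)
  have le: "sum_list (map g xs) \<le> sum_list (map f xs)"
    using Cons(3) by (intro sum_list_mono) auto
  have "g a \<le> f a" using Cons(3) by auto
  with le Cons(4) have "f a = g a" "sum_list (map f xs) = sum_list (map g xs)" by auto
  thus ?case using Cons by auto
qed simp

lemma iso_diag:
  assumes K: "K \<in> carrier_mat m m" and s: "s > 0"
    and iso: "\<And>w. w \<in> carrier_vec m \<Longrightarrow> sqf (K *\<^sub>v w) m = s * sqf w m"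
  shows "diagonalizable_mat K"
proof -
  from char_poly_factorized[OF K] obtain as where "char_poly K = (\<Prod>a\<leftarrow>as. [:- a, 1:])" by auto
  from jordan_nf_exists[OF K this] obtain n_as where jnf: "jordan_nf K n_as" by auto
  have ker: "mat_kernel (char_matrix K ev ^\<^sub>m 2) = mat_kernel (char_matrix K ev ^\<^sub>m 1)" for ev
  proof -
    let ?C = "char_matrix K ev"
    have C: "?C \<in> carrier_mat m m" using K by simp
    have p2: "?C ^\<^sub>m 2 = ?C * ?C" and p1: "?C ^\<^sub>m 1 = ?C" using C by (auto simp: numeral_2_eq_2)
    show ?thesis unfolding p1 p2
    proof (rule equalityI; rule subsetI)
      fix v assume "v \<in> mat_kernel (?C * ?C)"
      hence v: "v \<in> carrier_vec m" "(?C * ?C) *\<^sub>v v = 0\<^sub>v m" using C by (auto simp: mat_kernel_def)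
      hence "?C *\<^sub>v (?C *\<^sub>v v) = 0\<^sub>v m" using C by (simp add: assoc_mult_mat_vec[of _ m m _ m])
      from iso_nilp[OF K s iso v(1) refl this] show "v \<in> mat_kernel ?C" using v C by (auto simp: mat_kernel_def)
    next
      fix v assume "v \<in> mat_kernel ?C"
      hence v: "v \<in> carrier_vec m" "?C *\<^sub>v v = 0\<^sub>v m" using C by (auto simp: mat_kernel_def)
      hence "(?C * ?C) *\<^sub>v v = 0\<^sub>v m" using C by (simp add: assoc_mult_mat_vec[of _ m m _ m] mat_vec_zero)
      thus "v \<in> mat_kernel (?C * ?C)" using v C by (auto simp: mat_kernel_def)
    qed
  qed
  have dims: "dim_gen_eigenspace K ev 2 = dim_gen_eigenspace K ev 1" for ev
    unfolding dim_gen_eigenspace_def kernel_dim_def using ker[of ev] K by simp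
  have one: "n = 1" if na: "(n, a) \<in> set n_as" for n a
  proof -
    have eq: "sum_list (map (min 2) (map fst [(n, e)\<leftarrow>n_as . e = a])) =
      sum_list (map (min 1) (map fst [(n, e)\<leftarrow>n_as . e = a]))"
      using dims[of a] unfolding dim_gen_eigenspace[OF jnf] .
    have "min 2 n = min (1::nat) n"
      by (rule sum_list_eq_mono[OF _ eq]) (use na in force)+
    moreover have "n \<noteq> 0" using jnf na unfolding jordan_nf_def by force
    ultimately show ?thesis by linarith
  qed
  have "jordan_matrix n_as = mk_diagonal (map snd n_as)"
    unfolding jordan_matrix_def mk_diagonal_def map_map
  proof (rule arg_cong[of _ _ diag_block_mat], rule map_cong[OF refl])
    fix na assume "na \<in> set n_as"
    then obtain n a where na: "na = (n,a)" "(n,a) \<in> set n_as" using prod.exhaust_sel by metis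
    hence "n = 1" using one by blast
    thus "(case na of (n, a) \<Rightarrow> jordan_block n a) = ((\<lambda>a. mat (Suc 0) (Suc 0) (\<lambda>_. a)) \<circ> snd) na"
      unfolding na by (intro eq_matI) (auto simp: jordan_block_def)
  qed
  with jnf mk_diagonal_diagonal show ?thesis
    unfolding diagonalizable_mat_def jordan_nf_def by metis
qed

lemma Mv_idx:
  assumes "M \<in> carrier_mat nr nc" "w \<in> carrier_vec nc" "i < nr"
  shows "(M *\<^sub>v w) $ i = (\<Sum>j<nc. M $$ (i,j) * w $ j)"
  using assms by (simp add: mult_mat_vec_def scalar_prod_def lessThan_atLeast0)

lemma sqf_Suc: "sqf v (Suc m) = sqf v m + (cmod (v $ m))^2"
  unfolding sqf_def by simp

lemma cmod_lin_sq:
  fixes a b :: complex and t :: real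
  shows "(cmod (of_real t * a + b))^2 = t^2 * (cmod a)^2 + 2 * t * (Re a * Re b + Im a * Im b) + (cmod b)^2"
  unfolding cmod_power2 by (simp add: algebra_simps power2_eq_square)

lemma sphere_struct:
  assumes n1: "n \<ge> 1" and M: "M \<in> carrier_mat (n+1) (n+1)"
    and pres: "\<And>r. r > 0 \<Longrightarrow> proj_image M (Tsphere n r) = Tsphere n r"
  shows "M $$ (n,n) \<noteq> 0"
    "\<And>w. w \<in> carrier_vec (n+1) \<Longrightarrow> sqf (M *\<^sub>v w) (n+1) = (cmod (M $$ (n,n)))^2 * sqf w (n+1)"
proof -
  define d where "d = M $$ (n,n)"
  have B1: "sqf (M *\<^sub>v w) n = sqf w n * (cmod ((M *\<^sub>v w) $ n))^2 \<and> (M *\<^sub>v w) $ n \<noteq> 0"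
    if w: "w \<in> carrier_vec (n+1)" "w $ n = 1" "sqf w n > 0" for w
  proof -
    define r where "r = sqf w n"
    have wnz: "w \<noteq> 0\<^sub>v (n+1)" using w(2) by auto
    have "EQ n r w" unfolding EQ_def r_def sqf_def using w(2) by simp
    hence "proj_point w \<in> Tsphere n r" using memT[OF w(1)] wnz by simp
    from proj_image_mem[OF M w(1) wnz this] pres[of r] w(3) have "proj_point (M *\<^sub>v w) \<in> Tsphere n r"
      unfolding r_def by simp
    moreover have Mw: "M *\<^sub>v w \<in> carrier_vec (n+1)" using M w by simp
    ultimately have Mwnz: "M *\<^sub>v w \<noteq> 0\<^sub>v (n+1)" and E: "EQ n r (M *\<^sub>v w)" using memT by auto
    have "(M *\<^sub>v w) $ n \<noteq> 0"
    proof
      assume h: "(M *\<^sub>v w) $ n = 0"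
      hence "sqf (M *\<^sub>v w) n = 0" using E unfolding EQ_def sqf_def by simp
      hence "sqf (M *\<^sub>v w) (n+1) = 0" using h by (simp add: sqf_Suc)
      from sqf_zero[OF Mw this] Mwnz show False by simp
    qed
    thus ?thesis using E unfolding EQ_def sqf_def r_def by simp
  qed
  have B2: "M $$ (n,k) = 0 \<and> (\<forall>i<n. M $$ (i,n) = 0)" if k: "k < n" for k
  proof -
    define A where "A = (\<Sum>i<n. (cmod (M $$ (i,k)))^2)"
    define B where "B = (\<Sum>i<n. Re (M $$ (i,k)) * Re (M $$ (i,n)) + Im (M $$ (i,k)) * Im (M $$ (i,n)))"
    define C where "C = (\<Sum>i<n. (cmod (M $$ (i,n)))^2)"
    define P where "P = (cmod (M $$ (n,k)))^2"
    define Q where "Q = Re (M $$ (n,k)) * Re d + Im (M $$ (n,k)) * Im d"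
    define D where "D = (cmod d)^2"
    have poly: "t^2 * A + 2 * t * B + C = t^2 * (t^2 * P + 2 * t * Q + D)" if t: "t > 0" for t :: real
    proof -
      define w where "w = vec (n+1) (\<lambda>i. if i = k then complex_of_real t else if i = n then 1 else 0)"
      have w: "w \<in> carrier_vec (n+1)" "w $ n = 1" unfolding w_def using k by auto
      have Mw: "(M *\<^sub>v w) $ i = of_real t * M $$ (i,k) + M $$ (i,n)" if i: "i < n+1" for i
      proof -
        have "(M *\<^sub>v w) $ i = (\<Sum>j<n+1. M $$ (i,j) * w $ j)" by (rule Mv_idx[OF M w(1) i])
        also have "\<dots> = (\<Sum>j<n+1. (if j = k then of_real t * M $$ (i,k) else 0) + (if j = n then M $$ (i,n) else 0))"
          by (rule sum.cong) (use k in \<open>auto simp: w_def\<close>)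
        also have "\<dots> = of_real t * M $$ (i,k) + M $$ (i,n)" using k by (simp add: sum.distrib)
        finally show ?thesis .
      qed
      have sw: "sqf w n = t^2"
      proof -
        have "sqf w n = (\<Sum>j<n. if j = k then t^2 else 0)" unfolding sqf_def
          by (rule sum.cong) (use k in \<open>auto simp: w_def\<close>)
        thus ?thesis using k by simp
      qed
      from B1[OF w] have "sqf (M *\<^sub>v w) n = t^2 * (cmod ((M *\<^sub>v w) $ n))^2" using sw t by simp
      moreover have "sqf (M *\<^sub>v w) n = t^2 * A + 2 * t * B + C"
      proof -
        have "sqf (M *\<^sub>v w) n = (\<Sum>i<n. t^2 * (cmod (M $$ (i,k)))^2 + 2 * t * (Re (M $$ (i,k)) * Re (M $$ (i,n)) + Im (M $$ (i,k)) * Im (M $$ (i,n))) + (cmod (M $$ (i,n)))^2)"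
          unfolding sqf_def by (rule sum.cong) (auto simp: Mw cmod_lin_sq)
        also have "\<dots> = t^2 * A + 2 * t * B + C"
          unfolding A_def B_def C_def by (simp add: sum.distrib sum_distrib_left algebra_simps)
        finally show ?thesis .
      qed
      moreover have "(cmod ((M *\<^sub>v w) $ n))^2 = t^2 * P + 2 * t * Q + D"
        unfolding Mw[of n, simplified] P_def Q_def D_def d_def by (rule cmod_lin_sq)
      ultimately show ?thesis by simp
    qed
    have e1: "A + 2 * B + C = P + 2 * Q + D" using poly[of 1] by simp
    have e2: "4 * A + 4 * B + C = 16 * P + 16 * Q + 4 * D" using poly[of 2] by (simp add: algebra_simps)
    have e3: "9 * A + 6 * B + C = 81 * P + 54 * Q + 9 * D" using poly[of 3] by (simp add: algebra_simps)
    have e4: "16 * A + 8 * B + C = 256 * P + 128 * Q + 16 * D" using poly[of 4] by (simp add: algebra_simps)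
    have e5: "25 * A + 10 * B + C = 625 * P + 250 * Q + 25 * D" using poly[of 5] by (simp add: algebra_simps)
    have "P = 0" "C = 0" using e1 e2 e3 e4 e5 by linarith+
    hence "M $$ (n,k) = 0" "C = 0" unfolding P_def by auto
    moreover have "\<forall>i<n. M $$ (i,n) = 0"
    proof (intro allI impI)
      fix i assume i: "i < n"
      have "\<forall>i\<in>{..<n}. (cmod (M $$ (i,n)))^2 = 0"
        using \<open>C = 0\<close> unfolding C_def by (subst sum_nonneg_eq_0_iff[symmetric]) auto
      thus "M $$ (i,n) = 0" using i by auto
    qed
    ultimately show ?thesis by simp
  qed
  have rown: "(M *\<^sub>v w) $ n = d * w $ n" if w: "w \<in> carrier_vec (n+1)" for w
  proof -
    have "(M *\<^sub>v w) $ n = (\<Sum>j<n+1. M $$ (n,j) * w $ j)" by (rule Mv_idx[OF M w]) simp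
    also have "\<dots> = (\<Sum>j<n. M $$ (n,j) * w $ j) + d * w $ n" by (simp add: d_def)
    also have "(\<Sum>j<n. M $$ (n,j) * w $ j) = 0" using B2 by simp
    finally show ?thesis by simp
  qed
  have rowi: "(M *\<^sub>v w) $ i = (\<Sum>j<n. M $$ (i,j) * w $ j)" if w: "w \<in> carrier_vec (n+1)" and i: "i < n" for w i
  proof -
    have "(M *\<^sub>v w) $ i = (\<Sum>j<n+1. M $$ (i,j) * w $ j)" by (rule Mv_idx[OF M w]) (use i in simp)
    also have "\<dots> = (\<Sum>j<n. M $$ (i,j) * w $ j) + M $$ (i,n) * w $ n" by simp
    finally show ?thesis using B2[of 0] n1 i by simp
  qed
  show dnz: "M $$ (n,n) \<noteq> 0"
  proof -
    define w where "w = vec (n+1) (\<lambda>i. if i = 0 then (1::complex) else if i = n then 1 else 0)"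
    have w: "w \<in> carrier_vec (n+1)" "w $ n = 1" unfolding w_def by auto
    have "sqf w n \<ge> (cmod (w $ 0))^2" unfolding sqf_def
      by (rule member_le_sum[of 0 "{..<n}" "\<lambda>j. (cmod (w $ j))\<^sup>2"]) (use n1 in auto)
    hence "sqf w n > 0" using n1 by (simp add: w_def)
    from B1[OF w this] rown[OF w(1)] w(2) show ?thesis by (simp add: d_def)
  qed
  have B5: "sqf (M *\<^sub>v w) n = (cmod d)^2 * sqf w n" if w: "w \<in> carrier_vec (n+1)" for w
  proof (cases "sqf w n = 0")
    case True
    hence "\<forall>j\<in>{..<n}. (cmod (w $ j))^2 = 0" unfolding sqf_def
      by (subst sum_nonneg_eq_0_iff[symmetric]) auto
    hence "(M *\<^sub>v w) $ i = 0" if "i < n" for i using rowi[OF w that] by simp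
    hence "sqf (M *\<^sub>v w) n = 0" unfolding sqf_def by simp
    thus ?thesis using True by simp
  next
    case False
    define w' where "w' = vec (n+1) (\<lambda>i. if i < n then w $ i else 1)"
    have w': "w' \<in> carrier_vec (n+1)" "w' $ n = 1" unfolding w'_def by auto
    have s': "sqf w' n = sqf w n" unfolding sqf_def by (rule sum.cong) (auto simp: w'_def)
    have "sqf w n \<ge> 0" unfolding sqf_def by (rule sum_nonneg) simp
    hence "sqf w n > 0" using False by linarith
    from B1[OF w' this[folded s']] rown[OF w'(1)] w'(2)
    have "sqf (M *\<^sub>v w') n = sqf w n * (cmod d)^2" using s' by simp
    moreover have "sqf (M *\<^sub>v w') n = sqf (M *\<^sub>v w) n" unfolding sqf_def
    proof (rule sum.cong)
      fix i assume "i \<in> {..<n}"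
      hence i: "i < n" by simp
      have "(M *\<^sub>v w') $ i = (M *\<^sub>v w) $ i" unfolding rowi[OF w i] rowi[OF w'(1) i]
        by (rule sum.cong) (auto simp: w'_def)
      thus "(cmod ((M *\<^sub>v w') $ i))\<^sup>2 = (cmod ((M *\<^sub>v w) $ i))\<^sup>2" by simp
    qed simp
    ultimately show ?thesis by simp
  qed
  show "\<And>w. w \<in> carrier_vec (n+1) \<Longrightarrow> sqf (M *\<^sub>v w) (n+1) = (cmod (M $$ (n,n)))^2 * sqf w (n+1)"
    using B5 rown by (simp add: sqf_Suc d_def norm_mult power_mult_distrib algebra_simps)
qed

lemma complex_root_ex:
  assumes "k > 0"
  shows "\<exists>c::complex. c ^ k = z"
proof -
  define c where "c = rcis (root k (cmod z)) (Arg z / real k)"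
  have "c ^ k = rcis (root k (cmod z) ^ k) (real k * (Arg z / real k))"
    unfolding c_def by (rule DeMoivre2)
  also have "\<dots> = rcis (cmod z) (Arg z)" using assms by (simp add: real_root_pow_pos2)
  also have "\<dots> = z" by (rule rcis_cmod_Arg)
  finally show ?thesis by blast
qed

lemma eig_sim:
  assumes "similar_mat A B" "A \<in> carrier_mat m m" "B \<in> carrier_mat m m"
  shows "eigenvalue A k \<longleftrightarrow> eigenvalue (B::complex mat) k"
  using eigenvalue_root_char_poly[OF assms(2)] eigenvalue_root_char_poly[OF assms(3)]
    char_poly_similar[OF assms(1)] by simp

lemma conj_cancel:
  assumes H: "H \<in> carrier_mat m m" and Hi: "Hi \<in> carrier_mat m m" and X: "X \<in> carrier_mat m m"
    and HHi: "H * Hi = 1\<^sub>m m"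
  shows "H * (Hi * X * H) * Hi = (X :: complex mat)"
proof -
  have "H * (Hi * X * H) * Hi = (H * Hi) * X * (H * Hi)"
    using H Hi X by (simp add: assoc_mult_mat[of _ m m _ m _ m])
  also have "\<dots> = X" using HHi X by simp
  finally show ?thesis .
qed

lemma diag_eig:
  assumes D: "D \<in> carrier_mat m m" "diagonal_mat D" and i: "i < m"
  shows "eigenvalue (D::complex mat) (D $$ (i,i))"
proof -
  have "D *\<^sub>v unit_vec m i = D $$ (i,i) \<cdot>\<^sub>v unit_vec m i"
  proof (rule eq_vecI)
    fix j assume "j < dim_vec (D $$ (i,i) \<cdot>\<^sub>v unit_vec m i)"
    hence j: "j < m" by simp
    have "(D *\<^sub>v unit_vec m i) $ j = (\<Sum>l<m. D $$ (j,l) * unit_vec m i $ l)" by (rule Mv_idx[OF D(1) _ j]) simp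
    also have "\<dots> = (\<Sum>l<m. if l = i then D $$ (j,i) else 0)" by (rule sum.cong) (auto simp: i)
    also have "\<dots> = D $$ (j,i)" using i by simp
    finally show "(D *\<^sub>v unit_vec m i) $ j = (D $$ (i,i) \<cdot>\<^sub>v unit_vec m i) $ j"
      using D j i unfolding diagonal_mat_def by auto
  qed (use D in auto)
  moreover have "unit_vec m i \<noteq> 0\<^sub>v m"
  proof
    assume "unit_vec m i = 0\<^sub>v m"
    from arg_cong[OF this, of "\<lambda>v. v $ i"] i show False by simp
  qed
  ultimately show ?thesis unfolding eigenvalue_def eigenvector_def using D by (auto intro!: exI[of _ "unit_vec m i"])
qed

lemma prod_list_cmod:
  assumes "\<And>x. x \<in> set xs \<Longrightarrow> (cmod x)^2 = s"
  shows "(cmod (prod_list xs))^2 = s ^ length xs"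
  using assms by (induct xs) (auto simp: norm_mult power_mult_distrib)

lemma det_sim:
  assumes "similar_mat_wit A B P Q"
  shows "det A = det (B :: complex mat)"
proof -
  define m where "m = dim_row A"
  note w = similar_mat_witD[OF m_def assms]
  have "det A = det P * det B * det Q" unfolding w(3) using w by (simp add: det_mult[of _ m])
  also have "\<dots> = det B * (det P * det Q)" by (simp add: algebra_simps)
  also have "det P * det Q = 1" using det_mult[OF w(6) w(7)] w(1) by simp
  finally show ?thesis by simp
qed

lemma ellI:
  assumes n1: "n \<ge> 1" and G: "G \<in> carrier_mat (n+1) (n+1)"
    and H: "H \<in> carrier_mat (n+1) (n+1)" and Hi: "Hi \<in> carrier_mat (n+1) (n+1)"
    and HHi: "H * Hi = 1\<^sub>m (n+1)" and HiH: "Hi * H = 1\<^sub>m (n+1)"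
    and pres: "\<And>r::real. r > 0 \<Longrightarrow> proj_image (Hi * G * H) (Tsphere n r) = Tsphere n r"
  shows "elliptic n G"
  unfolding elliptic_def
proof (intro allI impI)
  fix L assume "SL_lift n G L"
  then obtain c where L: "L \<in> carrier_mat (n+1) (n+1)" "det L = 1" "c \<noteq> 0" "L = c \<cdot>\<^sub>m G"
    unfolding SL_lift_def by auto
  define M where "M = Hi * G * H"
  have M: "M \<in> carrier_mat (n+1) (n+1)" unfolding M_def using G H Hi by simp
  have presM: "\<And>r. r > 0 \<Longrightarrow> proj_image M (Tsphere n r) = Tsphere n r" unfolding M_def by (rule pres)
  have ss1: "M $$ (n,n) \<noteq> 0" using sphere_struct(1)[OF n1 M] presM by blast
  have ss2: "sqf (M *\<^sub>v w) (n+1) = (cmod (M $$ (n,n)))^2 * sqf w (n+1)" if "w \<in> carrier_vec (n+1)" for w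
    using sphere_struct(2)[OF n1 M] presM that by blast
  define K where "K = c \<cdot>\<^sub>m M"
  define s where "s = (cmod c)^2 * (cmod (M $$ (n,n)))^2"
  have K: "K \<in> carrier_mat (n+1) (n+1)" unfolding K_def using M by simp
  have s: "s > 0" unfolding s_def using ss1 L(3) by simp
  have iso: "sqf (K *\<^sub>v w) (n+1) = s * sqf w (n+1)" if w: "w \<in> carrier_vec (n+1)" for w
  proof -
    have "(K *\<^sub>v w) $ i = c * (M *\<^sub>v w) $ i" if i: "i < n+1" for i
    proof -
      have "(K *\<^sub>v w) $ i = (\<Sum>j<n+1. K $$ (i,j) * w $ j)" by (rule Mv_idx[OF K w i])
      also have "\<dots> = (\<Sum>j<n+1. c * (M $$ (i,j) * w $ j))"
        by (rule sum.cong) (use M i in \<open>auto simp: K_def\<close>)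
      also have "\<dots> = c * (M *\<^sub>v w) $ i" unfolding Mv_idx[OF M w i] sum_distrib_left ..
      finally show ?thesis .
    qed
    hence "sqf (K *\<^sub>v w) (n+1) = (\<Sum>j<n+1. (cmod c)^2 * (cmod ((M *\<^sub>v w) $ j))^2)" unfolding sqf_def
      by (intro sum.cong) (auto simp: norm_mult power_mult_distrib)
    hence "sqf (K *\<^sub>v w) (n+1) = (cmod c)^2 * sqf (M *\<^sub>v w) (n+1)" unfolding sqf_def
      by (simp only: sum_distrib_left)
    thus ?thesis using ss2[OF w] unfolding s_def by simp
  qed
  have LK: "L = H * K * Hi"
  proof -
    have "H * K * Hi = c \<cdot>\<^sub>m (H * M * Hi)" unfolding K_def using H Hi M
      by (simp add: mult_smult_distrib[of _ "n+1" "n+1"] mult_smult_assoc_mat[of _ "n+1" "n+1"])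
    also have "H * M * Hi = G" unfolding M_def by (rule conj_cancel[OF H Hi G HHi])
    finally show ?thesis using L(4) by simp
  qed
  have simLK: "similar_mat L K" unfolding similar_mat_def similar_mat_wit_def
    using L(1) K H Hi HHi HiH LK by (intro exI[of _ H] exI[of _ Hi]) (auto simp: Let_def)
  from iso_diag[OF K s iso] obtain D where D: "similar_mat K D" "diagonal_mat D"
    unfolding diagonalizable_mat_def by auto
  then obtain P Q where wKD: "similar_mat_wit K D P Q" unfolding similar_mat_def by auto
  have Dc: "D \<in> carrier_mat (n+1) (n+1)" using similar_mat_witD2[OF K wKD] by auto
  have eigK: "(cmod k)^2 = s" if "eigenvalue K k" for k by (rule iso_eig[OF K iso that])
  have "det L = det K" using det_sim simLK unfolding similar_mat_def by blast
  also have "\<dots> = det D" using det_sim wKD by blast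
  also have "\<dots> = prod_list (diag_mat D)"
    by (rule det_upper_triangular[OF _ Dc]) (use D(2) Dc in \<open>auto simp: upper_triangular_def diagonal_mat_def\<close>)
  finally have dD: "prod_list (diag_mat D) = 1" using L(2) by simp
  have hx: "(cmod x)^2 = s" if "x \<in> set (diag_mat D)" for x
  proof -
    from that obtain i where i: "i < n+1" "x = D $$ (i,i)" using Dc unfolding diag_mat_def
      by (auto simp del: upt_Suc)
    have "eigenvalue D x" unfolding i(2) by (rule diag_eig[OF Dc D(2) i(1)])
    hence "eigenvalue K x" using eig_sim[OF D(1) K Dc] by simp
    thus "(cmod x)^2 = s" by (rule eigK)
  qed
  have "(cmod (prod_list (diag_mat D)))^2 = s ^ length (diag_mat D)" by (rule prod_list_cmod[OF hx])
  moreover have "length (diag_mat D) = n+1" using Dc unfolding diag_mat_def by simp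
  ultimately have "s ^ (n+1) = 1" using dD by simp
  hence s1: "s = 1" using s power_eq_imp_eq_base[of s "n+1" 1] by simp
  show "diagonalizable_mat L \<and> (\<forall>k. eigenvalue L k \<longrightarrow> cmod k = 1)"
  proof
    show "diagonalizable_mat L" using similar_mat_trans[OF simLK D(1)] D(2)
      unfolding diagonalizable_mat_def by blast
    show "\<forall>k. eigenvalue L k \<longrightarrow> cmod k = 1"
    proof (intro allI impI)
      fix k assume "eigenvalue L k"
      hence "eigenvalue K k" using eig_sim[OF simLK L(1) K] by simp
      from eigK[OF this] s1 show "cmod k = 1" using norm_ge_zero[of k] by (auto simp add: power2_eq_1_iff)
    qed
  qed
qed

lemma ellD:
  assumes G: "G \<in> carrier_mat (n+1) (n+1)" and dG: "det G \<noteq> 0" and ell: "elliptic n G"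
  shows "\<exists>H Hi. H \<in> carrier_mat (n+1) (n+1) \<and> Hi \<in> carrier_mat (n+1) (n+1) \<and>
       H * Hi = 1\<^sub>m (n+1) \<and> Hi * H = 1\<^sub>m (n+1) \<and>
       (\<forall>r::real. r > 0 \<longrightarrow> proj_image (Hi * G * H) (Tsphere n r) = Tsphere n r)"
proof -
  obtain c where c: "c ^ (n+1) = inverse (det G)" using complex_root_ex[of "n+1"] by auto
  have c0: "c \<noteq> 0" using c dG by auto
  define L where "L = c \<cdot>\<^sub>m G"
  have Lc: "L \<in> carrier_mat (n+1) (n+1)" unfolding L_def using G by simp
  have "det L = c ^ (n+1) * det G" unfolding L_def using G by simp
  hence "det L = 1" using c dG by simp
  hence "SL_lift n G L" unfolding SL_lift_def using Lc c0 L_def by auto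
  with ell have dl: "diagonalizable_mat L" and eL: "\<And>k. eigenvalue L k \<Longrightarrow> cmod k = 1"
    unfolding elliptic_def by auto
  from dl obtain D where D: "similar_mat L D" "diagonal_mat D" unfolding diagonalizable_mat_def by auto
  then obtain P Q where w: "similar_mat_wit L D P Q" unfolding similar_mat_def by auto
  note ww = similar_mat_witD[OF _ w, of "n+1"]
  have P: "P \<in> carrier_mat (n+1) (n+1)" and Q: "Q \<in> carrier_mat (n+1) (n+1)"
    and Dc: "D \<in> carrier_mat (n+1) (n+1)" and PQ: "P * Q = 1\<^sub>m (n+1)" and QP: "Q * P = 1\<^sub>m (n+1)"
    and LPDQ: "L = P * D * Q" using ww Lc by auto
  have GL: "G = inverse c \<cdot>\<^sub>m L" unfolding L_def using c0 G by (intro eq_matI) auto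
  define K where "K = inverse c \<cdot>\<^sub>m D"
  have QGP: "Q * G * P = K"
  proof -
    have "Q * G * P = inverse c \<cdot>\<^sub>m (Q * L * P)" unfolding GL using Q P Lc
      by (simp add: mult_smult_distrib[of _ "n+1" "n+1"] mult_smult_assoc_mat[of _ "n+1" "n+1"])
    also have "Q * L * P = D" unfolding LPDQ by (rule conj_cancel[OF Q P Dc QP])
    finally show ?thesis unfolding K_def .
  qed
  have Kc: "K \<in> carrier_mat (n+1) (n+1)" unfolding K_def using Dc by simp
  have Kd: "diagonal_mat K" using D(2) Dc unfolding K_def diagonal_mat_def by auto
  have Kii: "cmod (K $$ (i,i)) = inverse (cmod c)" if i: "i < n+1" for i
  proof -
    have "eigenvalue D (D $$ (i,i))" by (rule diag_eig[OF Dc D(2) i])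
    hence "eigenvalue L (D $$ (i,i))" using eig_sim[OF D(1) Lc Dc] by simp
    hence "cmod (D $$ (i,i)) = 1" by (rule eL)
    thus ?thesis unfolding K_def using i Dc by (simp add: norm_mult norm_inverse)
  qed
  have "proj_image K (Tsphere n r) = Tsphere n r" for r
    by (rule diag_preserves[OF Kc Kd _ Kii]) (use c0 in simp)
  thus ?thesis using P Q PQ QP QGP by (intro exI[of _ P] exI[of _ Q]) auto
qed

theorem mainTheorem3:
  fixes n :: nat and G :: "complex mat"
  assumes "n \<ge> 1" and "G \<in> carrier_mat (n+1) (n+1)" and "det G \<noteq> 0"
  shows "elliptic n G \<longleftrightarrow>
    (\<exists>H Hi. H \<in> carrier_mat (n+1) (n+1) \<and> Hi \<in> carrier_mat (n+1) (n+1) \<and>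
       H * Hi = 1\<^sub>m (n+1) \<and> Hi * H = 1\<^sub>m (n+1) \<and>
       (\<forall>r::real. r > 0 \<longrightarrow> proj_image (Hi * G * H) (Tsphere n r) = Tsphere n r))"
proof
  assume "elliptic n G"
  thus "\<exists>H Hi. H \<in> carrier_mat (n+1) (n+1) \<and> Hi \<in> carrier_mat (n+1) (n+1) \<and>
       H * Hi = 1\<^sub>m (n+1) \<and> Hi * H = 1\<^sub>m (n+1) \<and>
       (\<forall>r::real. r > 0 \<longrightarrow> proj_image (Hi * G * H) (Tsphere n r) = Tsphere n r)"
    using ellD assms(2,3) by blast
next
  assume "\<exists>H Hi. H \<in> carrier_mat (n+1) (n+1) \<and> Hi \<in> carrier_mat (n+1) (n+1) \<and>
       H * Hi = 1\<^sub>m (n+1) \<and> Hi * H = 1\<^sub>m (n+1) \<and>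
       (\<forall>r::real. r > 0 \<longrightarrow> proj_image (Hi * G * H) (Tsphere n r) = Tsphere n r)"
  then obtain H Hi where h: "H \<in> carrier_mat (n+1) (n+1)" "Hi \<in> carrier_mat (n+1) (n+1)"
       "H * Hi = 1\<^sub>m (n+1)" "Hi * H = 1\<^sub>m (n+1)"
       "\<And>r::real. r > 0 \<Longrightarrow> proj_image (Hi * G * H) (Tsphere n r) = Tsphere n r" by blast
  show "elliptic n G" by (rule ellI[OF assms(1,2) h])
qed

end
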